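(* Let $\mathcal{G}=(G,\odot,\leq)$ be a real continuous Alo-group with $G$ an open interval of $\mathbb{R}$, and let $\tilde A$ be an $n\times n$ $[\mathcal{G}]$-reciprocal IPCM. Then: (1) if $\tilde A$ is Liu's $[\mathcal{G}]$-consistent, then $\tilde A$ is approximately $[\mathcal{G}]$-consistent; (2) if $\tilde A$ is approximately $[\mathcal{G}]$-consistent, then $\tilde A$ is $[\mathcal{G}]$-consistent.
   Context: An Alo-group $(G,\odot,\leq)$ is an Abelian group with identity $e$ and a weak order $\leq$ such that $a\leq b\Rightarrow a\odot c\leq b\odot c$; real means $G\subseteq\mathbb{R}$ with usual order, continuous means $\odot$ is continuous. $[G]=\{[a^-,a^+]: a^-,a^+\in G,\ a^-\leq a^+\}$; $\tilde a^{(-1)}=[(a^+)^{(-1)},(a^-)^{(-1)}]$; $\tilde a\odot_{[G]}\tilde b=\{a\odot b: a\in\tilde a,b\in\tilde b\}$. An IPCM $\tilde A=([a^-_{ij},a^+_{ij}])$ is an $n\times n$ matrix with entries in $[G]$; $[\mathcal{G}]$-reciprocal means $\tilde a_{ji}=\tilde a_{ij}^{(-1)}$. A PCM $(c_{ij})$ over $G$ is $\mathcal{G}$-consistent if $c_{ik}=c_{ij}\odot c_{jk}$ for all $i,j,k$. For a permutation $\sigma$ of $\{1,\dots,n\}$, let $l^\sigma_{ij}=a^-_{\sigma(i)\sigma(j)}$ if $i<j$, $e$ if $i=j$, $a^+_{\sigma(i)\sigma(j)}$ if $i>j$, and $r^\sigma_{ij}=a^+_{\sigma(i)\sigma(j)}$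 if $i<j$, $e$ if $i=j$, $a^-_{\sigma(i)\sigma(j)}$ if $i>j$. $\tilde A$ is Liu's $[\mathcal{G}]$-consistent if $L^\sigma=(l^\sigma_{ij})$ and $R^\sigma=(r^\sigma_{ij})$ are $\mathcal{G}$-consistent for $\sigma$ the identity permutation; approximately $[\mathcal{G}]$-consistent if there exists a permutation $\sigma$ such that $L^\sigma$ and $R^\sigma$ are $\mathcal{G}$-consistent; and $[\mathcal{G}]$-consistent if $\tilde a_{ij}\odot_{[G]}\tilde a_{jk}\odot_{[G]}\tilde a_{ki}=\tilde a_{ik}\odot_{[G]}\tilde a_{kj}\odot_{[G]}\tilde a_{ji}$ for all $i,j,k$. *)

theory Defs
  imports "HOL-Analysis.Analysis" "HOL-Combinatorics.Permutations"
begin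

definition real_alo_group :: "real set \<Rightarrow> (real \<Rightarrow> real \<Rightarrow> real) \<Rightarrow> real \<Rightarrow> bool" where
  "real_alo_group G f e \<longleftrightarrow>
     (\<forall>a\<in>G. \<forall>b\<in>G. f a b \<in> G) \<and>
     (\<forall>a\<in>G. \<forall>b\<in>G. \<forall>c\<in>G. f (f a b) c = f a (f b c)) \<and>
     (\<forall>a\<in>G. \<forall>b\<in>G. f a b = f b a) \<and>
     e \<in> G \<and> (\<forall>a\<in>G. f a e = a) \<and>
     (\<forall>a\<in>G. \<exists>b\<in>G. f a b = e) \<and>
     (\<forall>a\<in>G. \<forall>b\<in>G. \<forall>c\<in>G. a \<le> b \<longrightarrow> f a c \<le> f b c)"

definition continuous_alo :: "real set \<Rightarrow> (real \<Rightarrow> real \<Rightarrow> real) \<Rightarrow> bool" where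
  "continuous_alo G f \<longleftrightarrow> continuous_on (G \<times> G) (\<lambda>(x, y). f x y)"

definition open_real_interval :: "real set \<Rightarrow> bool" where
  "open_real_interval G \<longleftrightarrow> G \<noteq> {} \<and> open G \<and> is_interval G"

definition alo_inv :: "real set \<Rightarrow> (real \<Rightarrow> real \<Rightarrow> real) \<Rightarrow> real \<Rightarrow> real \<Rightarrow> real" where
  "alo_inv G f e a = (THE b. b \<in> G \<and> f a b = e)"

text \<open>Intervals [a^-, a^+] are represented by the pair (a^-, a^+); their point set.\<close>
definition ivl :: "real \<times> real \<Rightarrow> real set" where
  "ivl p = {fst p..snd p}"

definition set_op :: "(real \<Rightarrow> real \<Rightarrow> real) \<Rightarrow> real set \<Rightarrow> real set \<Rightarrow> real set" where
  "set_op f A B = {f a b | a b. a \<in> A \<and> b \<in> B}"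

definition is_IPCM :: "real set \<Rightarrow> nat \<Rightarrow> (nat \<Rightarrow> nat \<Rightarrow> real \<times> real) \<Rightarrow> bool" where
  "is_IPCM G n A \<longleftrightarrow> (\<forall>i<n. \<forall>j<n. fst (A i j) \<in> G \<and> snd (A i j) \<in> G \<and> fst (A i j) \<le> snd (A i j))"

definition ipcm_reciprocal :: "real set \<Rightarrow> (real \<Rightarrow> real \<Rightarrow> real) \<Rightarrow> real \<Rightarrow> nat \<Rightarrow> (nat \<Rightarrow> nat \<Rightarrow> real \<times> real) \<Rightarrow> bool" where
  "ipcm_reciprocal G f e n A \<longleftrightarrow>
     (\<forall>i<n. \<forall>j<n. A j i = (alo_inv G f e (snd (A i j)), alo_inv G f e (fst (A i j))))"

definition pcm_consistent :: "(real \<Rightarrow> real \<Rightarrow> real) \<Rightarrow> nat \<Rightarrow> (nat \<Rightarrow> nat \<Rightarrow> real) \<Rightarrow> bool" where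
  "pcm_consistent f n c \<longleftrightarrow> (\<forall>i<n. \<forall>j<n. \<forall>k<n. c i k = f (c i j) (c j k))"

definition Lmat :: "real \<Rightarrow> (nat \<Rightarrow> nat \<Rightarrow> real \<times> real) \<Rightarrow> (nat \<Rightarrow> nat) \<Rightarrow> nat \<Rightarrow> nat \<Rightarrow> real" where
  "Lmat e A \<sigma> i j = (if i < j then fst (A (\<sigma> i) (\<sigma> j)) else if i = j then e else snd (A (\<sigma> i) (\<sigma> j)))"

definition Rmat :: "real \<Rightarrow> (nat \<Rightarrow> nat \<Rightarrow> real \<times> real) \<Rightarrow> (nat \<Rightarrow> nat) \<Rightarrow> nat \<Rightarrow> nat \<Rightarrow> real" where
  "Rmat e A \<sigma> i j = (if i < j then snd (A (\<sigma> i) (\<sigma> j)) else if i = j then e else fst (A (\<sigma> i) (\<sigma> j)))"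

definition liu_consistent :: "(real \<Rightarrow> real \<Rightarrow> real) \<Rightarrow> real \<Rightarrow> nat \<Rightarrow> (nat \<Rightarrow> nat \<Rightarrow> real \<times> real) \<Rightarrow> bool" where
  "liu_consistent f e n A \<longleftrightarrow> pcm_consistent f n (Lmat e A id) \<and> pcm_consistent f n (Rmat e A id)"

definition approx_consistent :: "(real \<Rightarrow> real \<Rightarrow> real) \<Rightarrow> real \<Rightarrow> nat \<Rightarrow> (nat \<Rightarrow> nat \<Rightarrow> real \<times> real) \<Rightarrow> bool" where
  "approx_consistent f e n A \<longleftrightarrow>
     (\<exists>\<sigma>. \<sigma> permutes {..<n} \<and> pcm_consistent f n (Lmat e A \<sigma>) \<and> pcm_consistent f n (Rmat e A \<sigma>))"

definition ipcm_consistent :: "(real \<Rightarrow> real \<Rightarrow> real) \<Rightarrow> nat \<Rightarrow> (nat \<Rightarrow> nat \<Rightarrow> real \<times> real) \<Rightarrow> bool" where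
  "ipcm_consistent f n A \<longleftrightarrow> (\<forall>i<n. \<forall>j<n. \<forall>k<n.
     set_op f (set_op f (ivl (A i j)) (ivl (A j k))) (ivl (A k i)) =
     set_op f (set_op f (ivl (A i k)) (ivl (A k j))) (ivl (A j i)))"

end

theory Submission
  imports Defs
begin


lemma grp:
  assumes "real_alo_group G f e"
  shows cl: "\<And>a b. a\<in>G \<Longrightarrow> b\<in>G \<Longrightarrow> f a b \<in> G"
    and asc: "\<And>a b c. a\<in>G \<Longrightarrow> b\<in>G \<Longrightarrow> c\<in>G \<Longrightarrow> f (f a b) c = f a (f b c)"
    and cm: "\<And>a b. a\<in>G \<Longrightarrow> b\<in>G \<Longrightarrow> f a b = f b a"
    and eG: "e \<in> G" and un: "\<And>a. a\<in>G \<Longrightarrow> f a e = a"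
    and ex: "\<And>a. a\<in>G \<Longrightarrow> \<exists>b\<in>G. f a b = e"
    and mo: "\<And>a b c. a\<in>G \<Longrightarrow> b\<in>G \<Longrightarrow> c\<in>G \<Longrightarrow> a \<le> b \<Longrightarrow> f a c \<le> f b c"
  using assms unfolding real_alo_group_def by blast+

lemma inv_ok:
  assumes "real_alo_group G f e" "a \<in> G"
  shows "alo_inv G f e a \<in> G \<and> f a (alo_inv G f e a) = e"
proof -
  note g = grp[OF assms(1)]
  obtain b where b: "b\<in>G" "f a b = e" using g(6)[OF assms(2)] by blast
  have uq: "c = b" if "c \<in> G" "f a c = e" for c
  proof -
    have "c = f c e" using g(5) that by simp
    also have "\<dots> = f c (f a b)" using b by simp
    also have "\<dots> = f (f c a) b" using g(2)[of c a b] b that assms(2) by simp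
    also have "f c a = f a c" using g(3) that assms(2) by blast
    also have "f (f a c) b = f e b" using that by simp
    also have "\<dots> = f b e" using g(3)[of e b] g(4) b by simp
    also have "\<dots> = b" using g(5) b by simp
    finally show ?thesis .
  qed
  have "alo_inv G f e a = b" unfolding alo_inv_def
    by (rule the_equality) (use b uq in blast)+
  thus ?thesis using b by simp
qed

lemma cancel:
  assumes "real_alo_group G f e" "x\<in>G" "y\<in>G" "z\<in>G" "f x z = f y z"
  shows "x = y"
proof -
  note g = grp[OF assms(1)]
  obtain z' where z: "z'\<in>G" "f z z' = e" using g(6) assms by blast
  have "x = f x (f z z')" using g(5) z assms by simp
  also have "\<dots> = f (f x z) z'" using g(2)[of x z z'] z assms by simp
  also have "\<dots> = f (f y z) z'" using assms by simp
  also have "\<dots> = f y (f z z')" using g(2)[of y z z'] z assms by simp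
  also have "\<dots> = y" using g(5) z assms by simp
  finally show ?thesis .
qed

lemma lcm_ac:
  assumes "real_alo_group G f e" "a\<in>G" "b\<in>G" "c\<in>G"
  shows "f a (f b c) = f b (f a c)"
proof -
  note g = grp[OF assms(1)]
  have "f a (f b c) = f (f a b) c" using g(2) assms by simp
  also have "\<dots> = f (f b a) c" using g(3) assms by simp
  also have "\<dots> = f b (f a c)" using g(2) assms by simp
  finally show ?thesis .
qed

lemma swap_mid:
  assumes "real_alo_group G f e" "a\<in>G" "b\<in>G" "c\<in>G" "d\<in>G"
  shows "f (f a b) (f c d) = f (f a c) (f b d)"
proof -
  note g = grp[OF assms(1)]
  have "f (f a b) (f c d) = f a (f b (f c d))" using g(1,2) assms by simp
  also have "f b (f c d) = f c (f b d)" using lcm_ac[OF assms(1)] assms by simp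
  also have "f a (f c (f b d)) = f (f a c) (f b d)" using g(1,2) assms by simp
  finally show ?thesis .
qed

lemma key:
  assumes "real_alo_group G f e" and G: "p\<in>G" "q\<in>G" "r\<in>G" "s\<in>G" "t\<in>G" "u\<in>G"
   "q'\<in>G" "s'\<in>G" "u'\<in>G" and inv: "f q q' = e" "f s s' = e" "f u u' = e"
   and H: "f (f p q) (f r s) = f t u"
  shows "f (f p r) u' = f (f t s') q'"
proof -
  note g = grp[OF assms(1)]
  note lc = lcm_ac[OF assms(1)]
  have canc: "f x (f y z) = z" if "x\<in>G" "y\<in>G" "z\<in>G" "f y x = e" for x y z
  proof -
    have "f x (f y z) = f (f x y) z" using g(2)[of x y z] that by simp
    also have "f x y = f y x" using g(3) that by blast
    finally have "f x (f y z) = f (f y x) z" .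
    also have "\<dots> = f z e" using that g(3,4) by simp
    finally show ?thesis using g(5) that by simp
  qed
  define z where "z = f u (f s q)"
  have zG: "z \<in> G" using g(1) G z_def by simp
  have "f (f (f p r) u') z = f (f p r) (f u' (f u (f s q)))"
    unfolding z_def using g(1,2) G by simp
  also have "\<dots> = f (f p r) (f s q)" using canc G inv g(1) by simp
  also have "\<dots> = f (f p q) (f r s)" using g(1,2,3) lc G by simp
  finally have L: "f (f (f p r) u') z = f t u" using H by simp
  have "f (f (f t s') q') z = f t (f s' (f s (f q' (f q u))))"
    unfolding z_def using g(1,2,3) lc G by simp
  also have "\<dots> = f t u" using canc G inv g(1) by simp
  finally have R: "f (f (f t s') q') z = f t u" .
  show ?thesis using cancel[OF assms(1) _ _ zG] L R g(1) G by simp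
qed

lemma mono_both:
  assumes "real_alo_group G f e" "a\<in>G" "b\<in>G" "c\<in>G" "d\<in>G" "a \<le> b" "c \<le> d"
  shows "f a c \<le> f b d"
proof -
  note g = grp[OF assms(1)]
  have "f a c \<le> f b c" using g(7)[of a b c] assms by simp
  also have "f b c = f c b" using g(3)[of b c] assms by simp
  also have "\<dots> \<le> f d b" using g(7)[of c d b] assms by simp
  also have "\<dots> = f b d" using g(3)[of d b] assms by simp
  finally show ?thesis .
qed

lemma setop_ivl:
  assumes g0: "real_alo_group G f e" and c0: "continuous_alo G f" and iv: "is_interval G"
    and ab: "a \<le> b" and cd: "c \<le> d" and G: "a\<in>G" "b\<in>G" "c\<in>G" "d\<in>G"
  shows "set_op f {a..b} {c..d} = {f a c..f b d}"
proof -
  note g = grp[OF g0]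
  have sub1: "{a..b} \<subseteq> G"
  proof
    fix x assume "x \<in> {a..b}" thus "x \<in> G" using mem_is_interval_1_I[OF iv G(1) G(2)] by simp
  qed
  have sub2: "{c..d} \<subseteq> G"
  proof
    fix x assume "x \<in> {c..d}" thus "x \<in> G" using mem_is_interval_1_I[OF iv G(3) G(4)] by simp
  qed
  define h where "h = (\<lambda>(x::real, y::real). f x y)"
  have img: "set_op f {a..b} {c..d} = h ` ({a..b} \<times> {c..d})"
    unfolding set_op_def h_def by fastforce
  have mono2: "f x y \<le> f x y'" if "x\<in>G" "y\<in>G" "y'\<in>G" "y \<le> y'" for x y y'
  proof -
    have "f y x \<le> f y' x" using g(7)[of y y' x] that by simp
    moreover have "f x y = f y x" using g(3)[of x y] that by simp
    moreover have "f x y' = f y' x" using g(3)[of x y'] that by simp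
    ultimately show ?thesis by simp
  qed
  have "h ` ({a..b} \<times> {c..d}) \<subseteq> {f a c..f b d}"
  proof
    fix z assume "z \<in> h ` ({a..b} \<times> {c..d})"
    then obtain x y where xy: "x\<in>{a..b}" "y\<in>{c..d}" "z = f x y" unfolding h_def by auto
    have xG: "x\<in>G" "y\<in>G" using xy sub1 sub2 by auto
    have "f a c \<le> f x c" using g(7)[of a x c] G xG xy by simp
    also have "\<dots> \<le> f x y" using mono2[of x c y] G xG xy by simp
    finally have 1: "f a c \<le> z" using xy by simp
    have "f x y \<le> f b y" using g(7)[of x b y] G xG xy by simp
    also have "\<dots> \<le> f b d" using mono2[of b y d] G xG xy by simp
    finally have 2: "z \<le> f b d" using xy by simp
    show "z \<in> {f a c..f b d}" using 1 2 by simp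
  qed
  moreover have "{f a c..f b d} \<subseteq> h ` ({a..b} \<times> {c..d})"
  proof -
    have cont: "continuous_on ({a..b} \<times> {c..d}) h"
    proof -
      have "{a..b} \<times> {c..d} \<subseteq> G \<times> G" using sub1 sub2 by auto
      thus ?thesis unfolding h_def by (rule continuous_on_subset[OF c0[unfolded continuous_alo_def]])
    qed
    have "connected ({a..b} \<times> {c..d})" by (intro connected_Times) auto
    hence "connected (h ` ({a..b} \<times> {c..d}))" using cont connected_continuous_image by blast
    hence ii: "is_interval (h ` ({a..b} \<times> {c..d}))" using is_interval_connected_1 by blast
    have m1: "f a c \<in> h ` ({a..b} \<times> {c..d})"
      by (rule image_eqI[of _ _ "(a,c)"]) (use ab cd in \<open>auto simp: h_def\<close>)
    have m2: "f b d \<in> h ` ({a..b} \<times> {c..d})"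
      by (rule image_eqI[of _ _ "(b,d)"]) (use ab cd in \<open>auto simp: h_def\<close>)
    show ?thesis
    proof
      fix x assume "x \<in> {f a c..f b d}"
      thus "x \<in> h ` ({a..b} \<times> {c..d})" using mem_is_interval_1_I[OF ii m1 m2] by simp
    qed
  qed
  ultimately show ?thesis using img by auto
qed

lemma setop3:
  assumes "real_alo_group G f e" "continuous_alo G f" "is_interval G"
    "a\<in>G" "b\<in>G" "c\<in>G" "d\<in>G" "x\<in>G" "y\<in>G" "a \<le> b" "c \<le> d" "x \<le> y"
  shows "set_op f (set_op f {a..b} {c..d}) {x..y} = {f (f a c) x .. f (f b d) y}"
proof -
  note g = grp[OF assms(1)]
  have 1: "set_op f {a..b} {c..d} = {f a c..f b d}" using setop_ivl[OF assms(1-3)] assms by simp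
  have "f a c \<le> f b d" using mono_both[OF assms(1)] assms by simp
  thus ?thesis unfolding 1 using setop_ivl[OF assms(1-3)] assms g(1) by simp
qed

theorem proposition12:
  fixes G :: "real set" and f :: "real \<Rightarrow> real \<Rightarrow> real" and e :: real
    and n :: nat and A :: "nat \<Rightarrow> nat \<Rightarrow> real \<times> real"
  assumes "real_alo_group G f e" and "continuous_alo G f" and "open_real_interval G"
    and "is_IPCM G n A" and "ipcm_reciprocal G f e n A"
  shows "(liu_consistent f e n A \<longrightarrow> approx_consistent f e n A) \<and>
         (approx_consistent f e n A \<longrightarrow> ipcm_consistent f n A)"
proof (intro conjI impI)
  assume "liu_consistent f e n A"
  thus "approx_consistent f e n A"
    unfolding liu_consistent_def approx_consistent_def using permutes_id by blast
next
  assume "approx_consistent f e n A"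
  then obtain \<sigma> where sp: "\<sigma> permutes {..<n}" and cL: "pcm_consistent f n (Lmat e A \<sigma>)"
    and cR: "pcm_consistent f n (Rmat e A \<sigma>)" unfolding approx_consistent_def by blast
  note g = grp[OF assms(1)]
  define lo where "lo i j = fst (A i j)" for i j
  define hi where "hi i j = snd (A i j)" for i j
  define iv where "iv x = alo_inv G f e x" for x
  have loG: "lo i j \<in> G" and hiG: "hi i j \<in> G" and lh: "lo i j \<le> hi i j" if "i<n" "j<n" for i j
    using assms(4) that unfolding is_IPCM_def lo_def hi_def by auto
  have rec: "A j i = (iv (hi i j), iv (lo i j))" if "i<n" "j<n" for i j
    using assms(5) that unfolding ipcm_reciprocal_def iv_def lo_def hi_def by blast
  have ivp: "iv x \<in> G" "f x (iv x) = e" if "x\<in>G" for x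
    using inv_ok[OF assms(1) that] unfolding iv_def by auto
  define w where "w i j = f (lo i j) (hi i j)" for i j
  have sn: "\<sigma> p < n" if "p < n" for p using sp that permutes_in_image by fastforce
  have LG: "Lmat e A \<sigma> p q \<in> G" and RG: "Rmat e A \<sigma> p q \<in> G" if "p<n" "q<n" for p q
    using that sn loG hiG g(4) unfolding Lmat_def Rmat_def lo_def hi_def by auto
  have LRw: "f (Lmat e A \<sigma> p q) (Rmat e A \<sigma> p q) = w (\<sigma> p) (\<sigma> q)" if "p<n" "q<n" for p q
  proof (cases "p < q")
    case True thus ?thesis unfolding Lmat_def Rmat_def w_def lo_def hi_def by simp
  next
    case False
    show ?thesis
    proof (cases "p = q")
      case True
      have eq: "A (\<sigma> p) (\<sigma> p) = (iv (hi (\<sigma> p) (\<sigma> p)), iv (lo (\<sigma> p) (\<sigma> p)))"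
        using rec sn that by blast
      have "lo (\<sigma> p) (\<sigma> p) = fst (A (\<sigma> p) (\<sigma> p))" by (simp only: lo_def)
      also have "\<dots> = iv (hi (\<sigma> p) (\<sigma> p))" by (simp only: eq fst_conv)
      finally have "lo (\<sigma> p) (\<sigma> p) = iv (hi (\<sigma> p) (\<sigma> p))" .
      moreover have "hi (\<sigma> p) (\<sigma> p) \<in> G" using hiG sn that by simp
      ultimately have "w (\<sigma> p) (\<sigma> p) = e" unfolding w_def
        using ivp g(3)[of "iv (hi (\<sigma> p) (\<sigma> p))" "hi (\<sigma> p) (\<sigma> p)"] by simp
      thus ?thesis using True g(5) g(4) unfolding Lmat_def Rmat_def by simp
    next
      case False2: False
      have "f (Lmat e A \<sigma> p q) (Rmat e A \<sigma> p q) = f (hi (\<sigma> p) (\<sigma> q)) (lo (\<sigma> p) (\<sigma> q))"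
        using False False2 unfolding Lmat_def Rmat_def lo_def hi_def by simp
      also have "\<dots> = f (lo (\<sigma> p) (\<sigma> q)) (hi (\<sigma> p) (\<sigma> q))"
        by (rule g(3)[OF hiG[OF sn[OF that(1)] sn[OF that(2)]] loG[OF sn[OF that(1)] sn[OF that(2)]]])
      finally show ?thesis unfolding w_def .
    qed
  qed
  have wc0: "w (\<sigma> p) (\<sigma> r) = f (w (\<sigma> p) (\<sigma> q)) (w (\<sigma> q) (\<sigma> r))"
    if "p<n" "q<n" "r<n" for p q r
  proof -
    let ?L = "Lmat e A \<sigma>" and ?R = "Rmat e A \<sigma>"
    have "w (\<sigma> p) (\<sigma> r) = f (?L p r) (?R p r)" using LRw that by simp
    also have "\<dots> = f (f (?L p q) (?L q r)) (f (?R p q) (?R q r))"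
      using cL[unfolded pcm_consistent_def, rule_format, OF that(1,2,3)]
        cR[unfolded pcm_consistent_def, rule_format, OF that(1,2,3)] by simp
    also have "\<dots> = f (f (?L p q) (?R p q)) (f (?L q r) (?R q r))"
      by (rule swap_mid[OF assms(1) LG[OF that(1,2)] LG[OF that(2,3)] RG[OF that(1,2)] RG[OF that(2,3)]])
    also have "\<dots> = f (w (\<sigma> p) (\<sigma> q)) (w (\<sigma> q) (\<sigma> r))" using LRw that by simp
    finally show ?thesis .
  qed
  have surj: "\<exists>p<n. \<sigma> p = i" if "i<n" for i
  proof -
    have "\<sigma> ` {..<n} = {..<n}" using permutes_image[OF sp] .
    hence "i \<in> \<sigma> ` {..<n}" using that by simp
    then obtain p where "p \<in> {..<n}" "i = \<sigma> p" by (rule imageE)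
    thus ?thesis by auto
  qed
  have wc: "w i k = f (w i j) (w j k)" if ijk0: "i<n" "j<n" "k<n" for i j k
  proof -
    obtain p where p: "p<n" "\<sigma> p = i" using surj[OF ijk0(1)] by blast
    obtain q where q: "q<n" "\<sigma> q = j" using surj[OF ijk0(2)] by blast
    obtain r where r: "r<n" "\<sigma> r = k" using surj[OF ijk0(3)] by blast
    show ?thesis using wc0[OF p(1) q(1) r(1)] unfolding p(2) q(2) r(2) .
  qed
  show "ipcm_consistent f n A"
    unfolding ipcm_consistent_def
  proof (intro allI impI)
    fix i j k assume ijk: "i<n" "j<n" "k<n"
    have ivl: "ivl (A x y) = {lo x y..hi x y}" for x y unfolding ivl_def lo_def hi_def by simp
    have isi: "is_interval G" using assms(3) unfolding open_real_interval_def by simp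
    note S = setop_ivl[OF assms(1,2) isi]
    have r1: "A k i = (iv (hi i k), iv (lo i k))" using rec ijk by blast
    have r2: "A k j = (iv (hi j k), iv (lo j k))" using rec ijk by blast
    have r3: "A j i = (iv (hi i j), iv (lo i j))" using rec ijk by blast
    have lk: "lo k i = iv (hi i k)" "hi k i = iv (lo i k)" "lo k j = iv (hi j k)" "hi k j = iv (lo j k)"
      "lo j i = iv (hi i j)" "hi j i = iv (lo i j)"
      using r1 r2 r3 unfolding lo_def[of k i] hi_def[of k i] lo_def[of k j] hi_def[of k j]
        lo_def[of j i] hi_def[of j i] by simp_all
    have P1: "set_op f (set_op f (ivl (A i j)) (ivl (A j k))) (ivl (A k i))
       = {f (f (lo i j) (lo j k)) (lo k i) .. f (f (hi i j) (hi j k)) (hi k i)}"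
      unfolding ivl by (rule setop3[OF assms(1,2) isi]) (use lh loG hiG ijk in auto)
    have P2: "set_op f (set_op f (ivl (A i k)) (ivl (A k j))) (ivl (A j i))
       = {f (f (lo i k) (lo k j)) (lo j i) .. f (f (hi i k) (hi k j)) (hi j i)}"
      unfolding ivl by (rule setop3[OF assms(1,2) isi]) (use lh loG hiG ijk in auto)
    have H: "f (f (lo i j) (hi i j)) (f (lo j k) (hi j k)) = f (lo i k) (hi i k)"
      using wc[OF ijk(1,2,3)] unfolding w_def by simp
    have H2: "f (f (hi i j) (lo i j)) (f (hi j k) (lo j k)) = f (hi i k) (lo i k)"
      using H g(3)[OF hiG loG] ijk by simp
    have E1: "f (f (lo i j) (lo j k)) (lo k i) = f (f (lo i k) (lo k j)) (lo j i)"
      unfolding lk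
      by (rule key[OF assms(1), where p="lo i j" and q="hi i j" and r="lo j k" and s="hi j k"
          and t="lo i k" and u="hi i k"]) (use loG hiG ivp ijk H in auto)
    have E2: "f (f (hi i j) (hi j k)) (hi k i) = f (f (hi i k) (hi k j)) (hi j i)"
      unfolding lk
      by (rule key[OF assms(1), where p="hi i j" and q="lo i j" and r="hi j k" and s="lo j k"
          and t="hi i k" and u="lo i k"]) (use loG hiG ivp ijk H2 in auto)
    show "set_op f (set_op f (ivl (A i j)) (ivl (A j k))) (ivl (A k i)) =
          set_op f (set_op f (ivl (A i k)) (ivl (A k j))) (ivl (A j i))"
      using P1 P2 E1 E2 by simp
  qed
qed

end
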